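(* Let the target $m$ and surrogate $\tilde m$ be binary classifiers on $[0,1]^d$ that are locally Lipschitz continuous with constants $\gamma_m$ and $\gamma_{\tilde m}$ respectively (not necessarily ReLU), such that $m(\boldsymbol{w})=\tilde m(\boldsymbol{w})$ for every counterfactual $\boldsymbol{w}$. Assume the counterfactuals form a $\delta$-cover of the decision boundary of $m$. Then $|\tilde m(\boldsymbol{x})-m(\boldsymbol{x})|\le(\gamma_m+\gamma_{\tilde m})\,\delta$ for every $\boldsymbol{x}$ on the decision boundary of $m$.
   Context: A binary classifier $m:[0,1]^d\to[0,1]$ has predicted class $\mathds{1}[m(\boldsymbol{x})\ge0.5]$ and decision boundary $\{\boldsymbol{x}:m(\boldsymbol{x})=0.5\}$. A model $m$ is locally Lipschitz continuous (with constant $\gamma\ge0$) if for every $\boldsymbol{x}_1\in[0,1]^d$ there is a neighborhood $\mathbb{B}_{\boldsymbol{x}_1}\subseteq[0,1]^d$ of $\boldsymbol{x}_1$ such that $|m(\boldsymbol{x}_1)-m(\boldsymbol{x}_2)|\le\gamma\|\boldsymbol{x}_1-\boldsymbol{x}_2\|_2$ for all $\boldsymbol{x}_2\in\mathbb{B}_{\boldsymbol{x}_1}$. Counterfactuals are points returned by a counterfactual generator for queries (points of the favorable region obtained from queries in the unfavorable region). The counterfactuals form a $\delta$-cover of the decision boundary if every point $\boldsymbol{x}$ of the decision boundary of $m$ has a counterfactual $\boldsymbol{w}$ with $\|\boldsymbol{x}-\boldsymbol{w}\|_2\le\delta$. *)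

theory Defs
  imports "HOL-Analysis.Analysis"
begin

definition unit_cube :: "(real ^ 'd) set" where
  "unit_cube = {x. \<forall>i. 0 \<le> x $ i \<and> x $ i \<le> 1}"

definition binary_classifier :: "(real ^ 'd \<Rightarrow> real) \<Rightarrow> bool" where
  "binary_classifier m \<longleftrightarrow> (\<forall>x\<in>unit_cube. 0 \<le> m x \<and> m x \<le> 1)"

definition decision_boundary :: "(real ^ 'd \<Rightarrow> real) \<Rightarrow> (real ^ 'd) set" where
  "decision_boundary m = {x \<in> unit_cube. m x = 1/2}"

text \<open>Locally Lipschitz with constant gamma: every point x1 of the cube has a
  neighbourhood (relative to the cube, i.e. containing U \<inter> cube for some open U \<ni> x1)
  on which the Lipschitz inequality against x1 holds.\<close>
definition locally_lipschitz :: "real \<Rightarrow> (real ^ 'd \<Rightarrow> real) \<Rightarrow> bool" where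
  "locally_lipschitz \<gamma> m \<longleftrightarrow> \<gamma> \<ge> 0 \<and>
     (\<forall>x1\<in>unit_cube. \<exists>B. B \<subseteq> unit_cube \<and> (\<exists>U. open U \<and> x1 \<in> U \<and> U \<inter> unit_cube \<subseteq> B) \<and>
        (\<forall>x2\<in>B. \<bar>m x1 - m x2\<bar> \<le> \<gamma> * norm (x1 - x2)))"

definition delta_cover :: "real \<Rightarrow> (real ^ 'd) set \<Rightarrow> (real ^ 'd \<Rightarrow> real) \<Rightarrow> bool" where
  "delta_cover \<delta> W m \<longleftrightarrow> (\<forall>x\<in>decision_boundary m. \<exists>w\<in>W. norm (x - w) \<le> \<delta>)"

end

theory Submission
  imports Defs
begin

lemma cube_seg:
  assumes "a \<in> unit_cube" "b \<in> unit_cube" "0 \<le> t" "t \<le> 1"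
  shows "a + t *\<^sub>R (b - a) \<in> unit_cube"
proof -
  have "0 \<le> a $ i + t * (b $ i - a $ i) \<and> a $ i + t * (b $ i - a $ i) \<le> 1" for i
  proof -
    have h: "0 \<le> a $ i" "a $ i \<le> 1" "0 \<le> b $ i" "b $ i \<le> 1"
      using assms(1,2) unfolding unit_cube_def by auto
    have e: "a $ i + t * (b $ i - a $ i) = (1 - t) * a $ i + t * b $ i" by algebra
    have "0 \<le> (1 - t) * a $ i" "0 \<le> t * b $ i" using h assms by auto
    moreover have "(1 - t) * a $ i \<le> 1 - t" "t * b $ i \<le> t"
      using h assms by (auto intro: mult_left_le)
    ultimately show ?thesis unfolding e by linarith
  qed
  then show ?thesis unfolding unit_cube_def by simp
qed

lemma ll_continuous:
  fixes m :: "real ^ 'd \<Rightarrow> real"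
  assumes "locally_lipschitz \<gamma> m"
  shows "continuous_on unit_cube m"
  unfolding continuous_on_iff
proof (intro ballI allI impI)
  fix x1 :: "real ^ 'd" and e :: real assume x1: "x1 \<in> unit_cube" and e: "0 < e"
  from assms x1 obtain B U where B: "B \<subseteq> unit_cube" "open U" "x1 \<in> U" "U \<inter> unit_cube \<subseteq> B"
    and L: "\<forall>x2\<in>B. \<bar>m x1 - m x2\<bar> \<le> \<gamma> * norm (x1 - x2)" and g: "\<gamma> \<ge> 0"
    unfolding locally_lipschitz_def by blast
  from B(2,3) obtain r where r: "r > 0" "ball x1 r \<subseteq> U" using open_contains_ball by blast
  define d where "d = min r (e / (\<gamma> + 1))"
  have d: "d > 0" using r e g by (simp add: d_def)
  show "\<exists>d>0. \<forall>x'\<in>unit_cube. dist x' x1 < d \<longrightarrow> dist (m x') (m x1) < e"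
  proof (intro exI[of _ d] conjI ballI impI d)
    fix x' assume x': "x' \<in> unit_cube" "dist x' x1 < d"
    then have "x' \<in> ball x1 r" by (auto simp: d_def dist_commute)
    then have "x' \<in> B" using r B(4) x'(1) by blast
    then have "\<bar>m x1 - m x'\<bar> \<le> \<gamma> * norm (x1 - x')" using L by blast
    also have "\<dots> \<le> \<gamma> * d" using x'(2) g by (simp add: dist_norm norm_minus_commute mult_left_mono)
    also have "\<dots> < e"
    proof -
      have "d \<le> e / (\<gamma> + 1)" by (simp add: d_def)
      then have "\<gamma> * d \<le> \<gamma> * (e / (\<gamma> + 1))" using g by (intro mult_left_mono)
      also have "\<dots> < e" using g e by (simp add: field_simps)
      finally show ?thesis .
    qed
    finally show "dist (m x') (m x1) < e" by (simp add: dist_real_def abs_minus_commute)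
  qed
qed

lemma ll_global:
  fixes m :: "real ^ 'd \<Rightarrow> real"
  assumes ll: "locally_lipschitz \<gamma> m" and a: "a \<in> unit_cube" and b: "b \<in> unit_cube"
  shows "\<bar>m a - m b\<bar> \<le> \<gamma> * norm (a - b)"
proof -
  define p where "p t = a + t *\<^sub>R (b - a)" for t
  define g where "g t = m (p t)" for t
  have g0: "\<gamma> \<ge> 0" using ll unfolding locally_lipschitz_def by blast
  have pin: "p t \<in> unit_cube" if "t \<in> {0..1}" for t using cube_seg[OF a b] that by (auto simp: p_def)
  have cont: "continuous_on {0..1} g"
    unfolding g_def
    apply (rule continuous_on_compose2[OF ll_continuous[OF ll]])
    unfolding p_def by (auto intro!: continuous_intros simp: pin[unfolded p_def])
  have "lipschitz_on (\<gamma> * norm (b - a)) {0..1} g"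
  proof (rule locally_lipschitz_imp_lipschitz[OF cont])
    show "0 \<le> \<gamma> * norm (b - a)" using g0 by simp
    fix t y :: real assume t: "t \<in> {0..<1}" and y: "y > t"
    have "p t \<in> unit_cube" using pin t by auto
    from ll this obtain B U where B: "B \<subseteq> unit_cube" "open U" "p t \<in> U" "U \<inter> unit_cube \<subseteq> B"
      and L: "\<forall>x2\<in>B. \<bar>m (p t) - m x2\<bar> \<le> \<gamma> * norm (p t - x2)"
      unfolding locally_lipschitz_def by blast
    from B(2,3) obtain r where r: "r > 0" "ball (p t) r \<subseteq> U" using open_contains_ball by blast
    define z where "z = min y (min 1 (t + r / (2 * (norm (b - a) + 1))))"
    have "0 < 2 * (norm (b - a) + 1)" by (simp add: add_nonneg_pos)
    then have "0 < r / (2 * (norm (b - a) + 1))" using r(1) by simp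
    then have zt: "z > t" using y t r by (simp add: z_def)
    have z1: "z \<le> 1" "z \<le> y" by (auto simp: z_def)
    have zr: "z - t \<le> r / (2 * (norm (b - a) + 1))" by (simp add: z_def)
    have pd: "p t - p z = (z - t) *\<^sub>R (a - b)" by (simp add: p_def algebra_simps)
    have nd: "norm (p t - p z) = (z - t) * norm (b - a)"
      using zt by (simp add: pd norm_minus_commute)
    have "(z - t) * norm (b - a) \<le> r / (2 * (norm (b - a) + 1)) * norm (b - a)"
      using zr by (rule mult_right_mono) simp
    also have "\<dots> < r"
    proof -
      have "norm (b - a) < 2 * (norm (b - a) + 1)" by (smt (verit) norm_ge_zero)
      then have "r * norm (b - a) < r * (2 * (norm (b - a) + 1))" using r(1) by (rule mult_strict_left_mono)
      moreover have "0 < 2 * (norm (b - a) + 1)" by (smt (verit) norm_ge_zero)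
      ultimately have "r * norm (b - a) / (2 * (norm (b - a) + 1)) < r"
        by (simp add: pos_divide_less_eq mult.commute)
      then show ?thesis by simp
    qed
    finally have "p z \<in> ball (p t) r" using nd by (simp add: dist_norm)
    moreover have "p z \<in> unit_cube" using pin zt z1 t by auto
    ultimately have "p z \<in> B" using r B(4) by blast
    then have "\<bar>m (p t) - m (p z)\<bar> \<le> \<gamma> * ((z - t) * norm (b - a))" using L nd by metis
    then have "dist (g z) (g t) \<le> \<gamma> * norm (b - a) * (z - t)"
      by (simp add: g_def dist_real_def abs_minus_commute mult_ac)
    then show "\<exists>z\<in>{t<..y}. dist (g z) (g t) \<le> \<gamma> * norm (b - a) * (z - t)"
      using zt z1 by auto
  qed
  then have "dist (g 1) (g 0) \<le> \<gamma> * norm (b - a) * dist (1::real) 0"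
    by (rule lipschitz_onD) auto
  then show ?thesis by (simp add: g_def p_def dist_real_def norm_minus_commute abs_minus_commute)
qed

theorem corollary2:
  fixes m mt :: "real ^ 'd \<Rightarrow> real" and W :: "(real ^ 'd) set"
    and \<gamma>m \<gamma>mt \<delta> :: real
  assumes "binary_classifier m" and "binary_classifier mt"
    and "locally_lipschitz \<gamma>m m" and "locally_lipschitz \<gamma>mt mt"
    and "W \<subseteq> unit_cube"
    and "\<forall>w\<in>W. m w = mt w"
    and "delta_cover \<delta> W m"
    and "x \<in> decision_boundary m"
  shows "\<bar>mt x - m x\<bar> \<le> (\<gamma>m + \<gamma>mt) * \<delta>"
proof -
  obtain w where w: "w \<in> W" "norm (x - w) \<le> \<delta>" using assms(7,8) unfolding delta_cover_def by blast
  have x: "x \<in> unit_cube" using assms(8) by (simp add: decision_boundary_def)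
  have wc: "w \<in> unit_cube" using w assms(5) by blast
  have g1: "\<gamma>m \<ge> 0" "\<gamma>mt \<ge> 0" using assms(3,4) unfolding locally_lipschitz_def by auto
  have 1: "\<bar>m x - m w\<bar> \<le> \<gamma>m * norm (x - w)" by (rule ll_global[OF assms(3) x wc])
  have 2: "\<bar>mt x - mt w\<bar> \<le> \<gamma>mt * norm (x - w)" by (rule ll_global[OF assms(4) x wc])
  have "\<gamma>m * norm (x - w) \<le> \<gamma>m * \<delta>" "\<gamma>mt * norm (x - w) \<le> \<gamma>mt * \<delta>"
    using g1 w(2) by (auto intro: mult_left_mono)
  moreover have "m w = mt w" using assms(6) w by blast
  ultimately show ?thesis using 1 2 by (simp add: algebra_simps abs_le_iff)
qed

end
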